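(* Let $k,l,m$ be positive integers, $n=(l+1)k$, $A\in\mathbb{R}^{m\times n}$, $x\in\mathbb{R}^n$, $\epsilon\ge0$, $e\in\mathbb{R}^m$ with $\|e\|_2\le\epsilon$, $y=Ax+e$, let $p\in(0,1)$, let $x^{\star}$ be a solution of $\min_{\gamma}\|\gamma\|_p$ subject to $\|y-A\gamma\|_2\le\epsilon$, and let $h=x-x^{\star}$. Let $T_0^c=\{k+1,\dots,n\}$ and let $T_1,\dots,T_l$ be the partition of $T_0^c$ into consecutive blocks of size $k$ after ordering the indices of $T_0^c$ so that $|h_j|$ is non-increasing. Then $$\sum_{i=2}^l\|h_{T_i}\|_2\le\sqrt2\,C_1(p)k^{\frac12-\frac1p}\|h_{T_0^c}\|_p,\qquad C_1(p)=\begin{cases}(\frac p2)^{\frac12}\big(\frac{2}{2-p}\big)^{\frac12-\frac1p}, & p\in(0,p^{\star}],\\ 2^{\frac12-\frac1p}, & p\in(p^{\star},1).\end{cases}$$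
   Context: For $p\in(0,1)$, $\|\gamma\|_p=(\sum_i|\gamma_i|^p)^{1/p}$. For a vector $v$ and index set $T$, $v_T$ is the vector equal to $v$ on $T$ and zero elsewhere. $p^{\star}\approx0.45418$ is the unique solution in $(0,1]$ of $(\frac{p}{2})^{1/2}(2-p)^{\frac1p-\frac12}=1$. *)

theory Defs
  imports Complex_Main
begin

text \<open>Vectors in R^n are functions nat => real, only indices in {0..<n} matter
  (index i here corresponds to index i+1 in the paper). Matrices are nat => nat => real.\<close>

definition lp_norm :: "real \<Rightarrow> nat set \<Rightarrow> (nat \<Rightarrow> real) \<Rightarrow> real" where
  "lp_norm p S v = (\<Sum>i\<in>S. \<bar>v i\<bar> powr p) powr (1 / p)"

definition l2_norm :: "nat set \<Rightarrow> (nat \<Rightarrow> real) \<Rightarrow> real" where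
  "l2_norm S v = sqrt (\<Sum>i\<in>S. (v i)\<^sup>2)"

definition mat_vec :: "nat \<Rightarrow> (nat \<Rightarrow> nat \<Rightarrow> real) \<Rightarrow> (nat \<Rightarrow> real) \<Rightarrow> (nat \<Rightarrow> real)" where
  "mat_vec n A v = (\<lambda>i. \<Sum>j<n. A i j * v j)"

definition p_star :: real where
  "p_star = (THE p. 0 < p \<and> p \<le> 1 \<and> sqrt (p / 2) * (2 - p) powr (1 / p - 1 / 2) = 1)"

definition C1 :: "real \<Rightarrow> real" where
  "C1 p = (if p \<le> p_star then sqrt (p / 2) * (2 / (2 - p)) powr (1 / 2 - 1 / p)
           else 2 powr (1 / 2 - 1 / p))"

end

theory Submission
  imports Defs "HOL-Analysis.Convex"
begin


definition GG :: "real \<Rightarrow> real" where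
  "GG p = ln (p/2)/2 + (1/p - 1/2) * ln (2-p)"

lemma gg_exp:
  assumes "0 < p" "p < 2"
  shows "sqrt (p / 2) * (2 - p) powr (1 / p - 1 / 2) = exp (GG p)"
proof -
  have "sqrt (p/2) = (p/2) powr (1/2)" using assms by (simp add: powr_half_sqrt)
  also have "\<dots> = exp (ln (p/2)/2)" using assms by (simp add: powr_def)
  finally have 1: "sqrt (p/2) = exp (ln (p/2)/2)" .
  have 2: "(2 - p) powr (1 / p - 1 / 2) = exp ((1/p - 1/2) * ln (2-p))"
    using assms by (simp add: powr_def)
  show ?thesis unfolding 1 2 GG_def by (simp add: exp_add)
qed

lemma GG_deriv:
  assumes "0 < x" "x < 2"
  shows "DERIV GG x :> - ln (2-x) / x^2"
proof -
  have "DERIV (\<lambda>p. ln (p/2)/2 + (1/p - 1/2) * ln (2-p)) x :>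
      (1/(x/2)*(1/2))/2 + ((-1/x^2) * ln (2-x) + (1/x - 1/2) * (1/(2-x) * (-1)))"
    using assms
    by (auto intro!: derivative_eq_intros simp: power2_eq_square)
  moreover have "(1/(x/2)*(1/2))/2 + ((-1/x^2) * ln (2-x) + (1/x - 1/2) * (1/(2-x) * (-1)))
     = - ln (2-x) / x^2"
    using assms by (simp add: field_simps power2_eq_square)
  ultimately show ?thesis unfolding GG_def[abs_def] by simp
qed

lemma GG_cont: "0 < x \<Longrightarrow> x < 2 \<Longrightarrow> isCont GG x"
  using GG_deriv DERIV_isCont by blast

lemma GG_strict:
  assumes "0 < a" "a < b" "b \<le> 1"
  shows "GG b < GG a"
proof (rule DERIV_neg_imp_decreasing_open[OF assms(2)])
  fix x assume "a < x" "x < b"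
  then have "ln (2-x) > 0" "x^2 > 0" using assms by auto
  then show "\<exists>y. DERIV GG x :> y \<and> y < 0"
    using GG_deriv \<open>a < x\<close> \<open>x < b\<close> assms by (intro exI[of _ "- ln (2-x) / x^2"]) auto
next
  show "continuous_on {a..b} GG"
    using GG_cont assms by (intro continuous_at_imp_continuous_on) auto
qed

lemma GG_half: "GG (1/2) < 0"
proof -
  have e: "exp (GG (1/2)) = sqrt (1/4) * (3/2) powr (3/2)"
    using gg_exp[of "1/2"] by simp
  have a: "(3/2::real) powr (3/2) = (3/2) * sqrt (3/2)"
    using powr_add[of "3/2::real" 1 "1/2"] by (simp add: powr_half_sqrt)
  have b: "sqrt (3/2::real) < 4/3"
    by (rule real_less_lsqrt) (auto simp: power2_eq_square)
  have h: "sqrt (1/4::real) = 1/2" by (rule real_sqrt_unique) (auto simp: power2_eq_square)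
  have "exp (GG (1/2)) < 1" unfolding e a h using b by linarith
  then show ?thesis by simp
qed

lemma GG_2_5: "GG (2/5) > 0"
proof -
  have "exp (GG (2/5)) = sqrt (1/5) * (8/5) powr 2"
    using gg_exp[of "2/5"] by simp
  also have "(8/5::real) powr 2 = 64/25"
    by (simp add: powr_numeral power2_eq_square)
  also have "sqrt (1/5::real) > 25/64"
    by (rule real_less_rsqrt) (auto simp: power2_eq_square)
  then have "sqrt (1/5) * (64/25::real) > 1" by simp
  finally show ?thesis by simp
qed

lemma p_star_props: "0 < p_star \<and> p_star < 1/2 \<and> GG p_star = 0"
proof -
  obtain r where r: "2/5 \<le> r" "r \<le> 1/2" "GG r = 0"
    using IVT2[of GG "1/2" 0 "2/5"] GG_half GG_2_5 GG_cont by force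
  have ex: "\<exists>!p. 0 < p \<and> p \<le> 1 \<and> sqrt (p / 2) * (2 - p) powr (1 / p - 1 / 2) = 1"
  proof (rule ex1I[of _ r])
    show "0 < r \<and> r \<le> 1 \<and> sqrt (r / 2) * (2 - r) powr (1 / r - 1 / 2) = 1"
      using r gg_exp[of r] by simp
  next
    fix q assume q: "0 < q \<and> q \<le> 1 \<and> sqrt (q / 2) * (2 - q) powr (1 / q - 1 / 2) = 1"
    then have "GG q = 0" using gg_exp[of q] by simp
    show "q = r"
    proof (rule ccontr)
      assume "q \<noteq> r"
      then have "q < r \<or> r < q" by auto
      then show False using GG_strict[of q r] GG_strict[of r q] r q \<open>GG q = 0\<close> by auto
    qed
  qed
  have "0 < p_star \<and> p_star \<le> 1 \<and> sqrt (p_star / 2) * (2 - p_star) powr (1 / p_star - 1 / 2) = 1"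
    unfolding p_star_def by (rule theI'[OF ex])
  then have ps: "0 < p_star" "p_star \<le> 1" "GG p_star = 0" using gg_exp[of p_star] by auto
  have "p_star < 1/2"
  proof (rule ccontr)
    assume "\<not> p_star < 1/2"
    then consider "p_star = 1/2" | "1/2 < p_star" by linarith
    then show False
    proof cases
      case 1 note e = this
      have "GG p_star = GG (1/2)" by (simp only: e)
      then show False using GG_half ps by linarith
    next
      case 2 then show False using GG_half GG_strict[of "1/2" p_star] ps by linarith
    qed
  qed
  then show ?thesis using ps by auto
qed



lemma bmono:
  fixes b :: "nat \<Rightarrow> real"
  assumes mono: "\<forall>i. 2 \<le> i \<and> i \<le> L \<longrightarrow> b i \<le> b (i-1)"
    and "1 \<le> i" "i \<le> j" "j \<le> L"
  shows "b j \<le> b i"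
proof -
  have "j \<le> L \<longrightarrow> b j \<le> b i" using \<open>i \<le> j\<close>
  proof (induction j rule: dec_induct)
    case base then show ?case by simp
  next
    case (step n)
    show ?case
    proof
      assume "Suc n \<le> L"
      then have "b (Suc n) \<le> b n" using mono step.hyps assms(2) by (metis Suc_le_mono diff_Suc_1 le_trans one_add_one plus_1_eq_Suc)
      then show "b (Suc n) \<le> b i" using step \<open>Suc n \<le> L\<close> by auto
    qed
  qed
  then show ?thesis using assms by auto
qed

lemma sum_shift_prev:
  fixes b :: "nat \<Rightarrow> real"
  assumes "\<forall>i. 0 \<le> b i" "2 \<le> L"
  shows "(\<Sum>i\<in>{3..L}. b (i-1)) \<le> (\<Sum>i\<in>{2..L}. b i)"
proof -
  obtain L' where L: "L = Suc L'" using assms by (cases L) auto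
  have "(\<Sum>i\<in>{3..L}. b (i-1)) = (\<Sum>i\<in>{Suc 2..Suc L'}. b (i-1))" using L by simp
  also have "\<dots> = (\<Sum>i\<in>{2..L'}. b i)" by (subst sum.shift_bounds_cl_Suc_ivl) simp
  also have "\<dots> \<le> (\<Sum>i\<in>{2..L}. b i)" using assms L by (intro sum_mono2) auto
  finally show ?thesis .
qed

lemma RL2:
  fixes b :: "nat \<Rightarrow> real" and s :: real
  assumes s: "1 \<le> s" "s \<le> 2" and nn: "\<forall>i. 0 \<le> b i"
    and mono: "\<forall>i. 2 \<le> i \<and> i \<le> L \<longrightarrow> b i \<le> b (i-1)"
  shows "(\<Sum>i\<in>{2..L}. b (i-1) powr (s - 1/2) * sqrt (b i))
          \<le> 2 powr (1-s) * (\<Sum>i\<in>{1..L}. b i) powr s"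
proof (cases "2 \<le> L")
  case False
  then have "{2..L} = {}" by auto
  then show ?thesis by simp
next
  case L: True
  define x where "x = b 1"
  define y where "y = b 2"
  define z where "z = (\<Sum>i\<in>{2..L}. b i)"
  define B where "B = (\<Sum>i\<in>{1..L}. b i)"
  have x0: "0 \<le> x" and y0: "0 \<le> y" using nn x_def y_def by auto
  have z0: "0 \<le> z" unfolding z_def using nn by (simp add: sum_nonneg)
  have Bxz: "B = x + z" unfolding B_def x_def z_def using L
    by (subst sum.atLeast_Suc_atMost) (auto simp: numeral_2_eq_2)
  have zy: "z = y + (\<Sum>i\<in>{3..L}. b i)" unfolding z_def y_def using L
    by (subst sum.atLeast_Suc_atMost) auto
  have le_x: "b (i-1) \<le> x" if "i \<in> {2..L}" for i
    unfolding x_def using bmono[OF mono, of 1 "i-1"] that by auto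
  have trm: "b (i-1) powr (s - 1/2) * sqrt (b i) \<le> x powr (s-1) * sqrt (b (i-1) * b i)"
    if "i \<in> {2..L}" for i
  proof -
    have "b (i-1) powr (s - 1/2) = b (i-1) powr (s-1) * b (i-1) powr (1/2)"
      by (simp add: powr_add[symmetric])
    also have "b (i-1) powr (1/2) = sqrt (b (i-1))" using nn by (simp add: powr_half_sqrt)
    finally have "b (i-1) powr (s - 1/2) * sqrt (b i) = b (i-1) powr (s-1) * sqrt (b (i-1) * b i)"
      by (simp add: real_sqrt_mult)
    also have "\<dots> \<le> x powr (s-1) * sqrt (b (i-1) * b i)"
      using le_x[OF that] nn s by (intro mult_right_mono powr_mono2) auto
    finally show ?thesis .
  qed
  define Q where "Q = (\<Sum>i\<in>{2..L}. sqrt (b (i-1) * b i))"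
  have F1: "(\<Sum>i\<in>{2..L}. b (i-1) powr (s - 1/2) * sqrt (b i)) \<le> x powr (s-1) * Q"
    unfolding Q_def sum_distrib_left using trm by (intro sum_mono) auto
  have amgm: "sqrt (u * v) \<le> (u + v)/2" if "0 \<le> u" "0 \<le> v" for u v :: real
    using arith_geo_mean_sqrt[OF that] by simp
  have Qs: "Q = sqrt (x*y) + (\<Sum>i\<in>{3..L}. sqrt (b (i-1) * b i))"
    unfolding Q_def x_def y_def using L by (subst sum.atLeast_Suc_atMost) auto
  have "(\<Sum>i\<in>{3..L}. sqrt (b (i-1) * b i)) \<le> (\<Sum>i\<in>{3..L}. (b (i-1) + b i)/2)"
    using nn amgm by (intro sum_mono) auto
  also have "\<dots> = ((\<Sum>i\<in>{3..L}. b (i-1)) + (\<Sum>i\<in>{3..L}. b i))/2"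
    by (simp add: sum.distrib sum_divide_distrib[symmetric])
  also have "\<dots> \<le> (z + (z - y))/2"
    using sum_shift_prev[OF nn L] zy unfolding z_def by simp
  finally have Q1: "Q \<le> sqrt (x*y) + z - y/2" using Qs by simp
  have Q2: "2 * x * Q \<le> B^2"
  proof -
    have h: "2 * sqrt (x*y) \<le> x + y" using amgm[OF x0 y0] by simp
    have h2: "x * (2 * sqrt (x*y)) \<le> x * (x + y)" using mult_left_mono[OF h x0] .
    have h3: "(2*x) * Q \<le> (2*x) * (sqrt (x*y) + z - y/2)" using Q1 x0 by (intro mult_left_mono) auto
    have "(2*x) * (sqrt (x*y) + z - y/2) = x * (2 * sqrt (x*y)) + 2*x*z - x*y"
      by (simp add: algebra_simps)
    then have "2 * x * Q \<le> x*(x+y) + 2*x*z - x*y" using h2 h3 by linarith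
    also have "\<dots> \<le> B^2" unfolding Bxz using z0 by (simp add: power2_eq_square algebra_simps)
    finally show ?thesis .
  qed
  have Qb: "Q \<le> B"
  proof -
    have "sqrt (x*y) \<le> x/2 + y/2" using amgm[OF x0 y0] by (simp add: add_divide_distrib)
    then show ?thesis using Q1 Bxz x0 by linarith
  qed
  have Q0: "0 \<le> Q" unfolding Q_def using nn by (intro sum_nonneg) simp
  have B0: "0 \<le> B" using Bxz x0 z0 by simp
  have RHS: "2 powr (1-s) * B powr s = (B/2) powr (s-1) * B"
  proof -
    have a: "(B/2) powr s = (B/2) powr (s-1) * (B/2) powr 1" using powr_add[of "B/2" "s-1" 1] by simp
    have b: "(B/2) powr 1 = B/2" using B0 by simp
    have c: "(B/2) powr s = B powr s / 2 powr s" by (rule powr_divide)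
    have d: "2 powr (1-s) = 2 / 2 powr s" by (simp add: powr_diff)
    have P: "2 powr s > (0::real)" by simp
    have "(B/2) powr (s-1) * B = 2 * (B/2) powr s" using a b by simp
    also have "\<dots> = 2 * B powr s / 2 powr s" using c by simp
    also have "\<dots> = 2 powr (1-s) * B powr s" using d by simp
    finally show ?thesis by simp
  qed
  have main: "x powr (s-1) * Q \<le> (B/2) powr (s-1) * B"
  proof (cases "x \<le> B/2")
    case True
    have "x powr (s-1) \<le> (B/2) powr (s-1)" using True x0 s by (intro powr_mono2) auto
    then show ?thesis using Qb Q0 B0 by (intro mult_mono) auto
  next
    case False
    then have Bp: "B > 0" using x0 Bxz z0 by linarith
    have "x = (B/2) * (2*x/B)" using Bp by simp
    then have "x powr (s-1) = ((B/2) * (2*x/B)) powr (s-1)" by simp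
    also have "\<dots> = (B/2) powr (s-1) * (2*x/B) powr (s-1)"
      by (rule powr_mult)
    also have "(2*x/B) powr (s-1) \<le> (2*x/B) powr 1"
      using False Bp s by (intro powr_mono) (auto simp: field_simps)
    finally have "x powr (s-1) \<le> (B/2) powr (s-1) * (2*x/B)"
      using Bp x0 by (simp add: mult_left_mono)
    then have "x powr (s-1) * Q \<le> ((B/2) powr (s-1) * (2*x/B)) * Q"
      using Q0 by (rule mult_right_mono)
    also have "\<dots> = (B/2) powr (s-1) * ((2*x/B) * Q)" by (simp only: mult.assoc)
    also have "(2*x/B) * Q \<le> B" using Q2 Bp by (simp add: field_simps power2_eq_square)
    then have "(B/2) powr (s-1) * ((2*x/B) * Q) \<le> (B/2) powr (s-1) * B"
      by (rule mult_left_mono) simp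
    finally show ?thesis .
  qed
  show ?thesis using F1 main RHS unfolding B_def by linarith
qed



lemma polyA: fixes x y z :: real assumes "0 \<le> y" "y \<le> x" "2*y \<le> z"
  shows "(x+y)^2 + 2*y*(2*z-y) \<le> 7/5*(x+z)^2"
proof -
  define t where "t = z - 2*y"
  have t: "0 \<le> t" "z = 2*y + t" using assms t_def by auto
  have e: "7/5*(x+z)^2 - ((x+y)^2 + 2*y*(2*z-y)) = 2/5*x*x + 18/5*(y*(x-y)) + 11/5*y*y + t*(8/5*y + 14/5*x) + 7/5*t*t"
    unfolding t(2) by (simp add: algebra_simps power2_eq_square) (simp add: field_simps)
  have "0 \<le> y*(x-y)" "0 \<le> x*x" "0 \<le> y*y" "0 \<le> t*(8/5*y + 14/5*x)" "0 \<le> t*t"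
    using assms t by auto
  then show ?thesis using e by linarith
qed
lemma polyB: fixes x y z :: real assumes "0 \<le> y" "y \<le> x" "y \<le> z" "z \<le> 2*y"
  shows "(x+y)^2 + z*(2*z-y) \<le> 7/5*(x+z)^2"
proof -
  define u where "u = x - y"
  define v where "v = z - y"
  have uv: "0 \<le> u" "0 \<le> v" "v \<le> y" "x = y + u" "z = y + v" using assms u_def v_def by auto
  have e: "7/5*(x+z)^2 - ((x+y)^2 + z*(2*z-y)) = 3/5*y*y + 2*y*v + 3/5*(v*(y-v)) + 8/5*y*u + 2/5*u*u + 14/5*u*v"
    unfolding uv(4,5) by (simp add: algebra_simps power2_eq_square) (simp add: field_simps)
  have "0 \<le> y*y" "0 \<le> y*v" "0 \<le> v*(y-v)" "0 \<le> y*u" "0 \<le> u*u" "0 \<le> u*v"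
    using assms uv by auto
  then show ?thesis using e by linarith
qed

lemma amgm_w:
  fixes u v p :: real
  assumes p: "0 < p" "p < 1" and uv: "0 \<le> u" "0 \<le> v"
  shows "u powr (1/p - 1/2) * sqrt v \<le> sqrt (p/2) * ((2-p)/2) powr (1/p - 1/2) * (u+v) powr (1/p)"
proof (cases "u = 0 \<or> v = 0")
  case True
  have "1/p - 1/2 > 0" using p by (simp add: field_simps)
  then have "u powr (1/p - 1/2) * sqrt v = 0" using True by auto
  moreover have "0 \<le> sqrt (p/2) * ((2-p)/2) powr (1/p - 1/2) * (u+v) powr (1/p)"
    using p by (intro mult_nonneg_nonneg) auto
  ultimately show ?thesis by linarith
next
  case False
  then have u: "u > 0" and v: "v > 0" using uv by auto
  define al where "al = (2-p)/2"
  define be where "be = p/2"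
  have al: "0 < al" and be: "0 < be" and ab: "al + be = 1" using p al_def be_def by auto
  have Y: "(u/al) powr al * (v/be) powr be \<le> al*(u/al) + be*(v/be)"
    using al be ab u v by (intro Youngs_inequality_0) auto
  then have Y': "(u/al) powr al * (v/be) powr be \<le> u + v" using al be by simp
  have "((u/al) powr al * (v/be) powr be) powr (1/p) \<le> (u+v) powr (1/p)"
    using Y' p by (intro powr_mono2) auto
  moreover have "((u/al) powr al * (v/be) powr be) powr (1/p)
      = (u/al) powr (1/p - 1/2) * (v/be) powr (1/2)"
  proof -
    have "al * (1/p) = 1/p - 1/2" "be * (1/p) = 1/2" using p unfolding al_def be_def
      by (auto simp: field_simps)
    then show ?thesis by (simp add: powr_mult powr_powr)
  qed
  ultimately have H: "(u/al) powr (1/p - 1/2) * (v/be) powr (1/2) \<le> (u+v) powr (1/p)" by simp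
  have "u powr (1/p - 1/2) * sqrt v
      = (al powr (1/p - 1/2) * be powr (1/2)) * ((u/al) powr (1/p - 1/2) * (v/be) powr (1/2))"
    using al be u v by (simp add: powr_divide powr_half_sqrt field_simps)
  also have "\<dots> \<le> (al powr (1/p - 1/2) * be powr (1/2)) * (u+v) powr (1/p)"
    using H by (intro mult_left_mono) auto
  also have "al powr (1/p - 1/2) * be powr (1/2) = sqrt (p/2) * ((2-p)/2) powr (1/p - 1/2)"
    unfolding al_def be_def using p by (simp add: powr_half_sqrt)
  finally show ?thesis .
qed

lemma sumsq:
  fixes b :: "nat \<Rightarrow> real"
  assumes nn: "\<forall>i. 0 \<le> b i"
    and mono: "\<forall>i. 2 \<le> i \<and> i \<le> L \<longrightarrow> b i \<le> b (i-1)"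
  shows "(\<Sum>i\<in>{2..L}. (b (i-1) + b i)^2) \<le> 7/5 * (\<Sum>i\<in>{1..L}. b i)^2"
proof (cases "2 \<le> L")
  case False
  then have "{2..L} = {}" by auto
  then show ?thesis by simp
next
  case L: True
  define x where "x = b 1"
  define y where "y = b 2"
  define z where "z = (\<Sum>i\<in>{2..L}. b i)"
  have x0: "0 \<le> x" and y0: "0 \<le> y" using nn x_def y_def by auto
  have Bxz: "(\<Sum>i\<in>{1..L}. b i) = x + z" unfolding x_def z_def using L
    by (subst sum.atLeast_Suc_atMost) (auto simp: numeral_2_eq_2)
  have zy: "z = y + (\<Sum>i\<in>{3..L}. b i)" unfolding z_def y_def using L
    by (subst sum.atLeast_Suc_atMost) auto
  have r0: "0 \<le> (\<Sum>i\<in>{3..L}. b i)" using nn by (simp add: sum_nonneg)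
  have yx: "y \<le> x"
  proof -
    have "b 2 \<le> b (2-1)" using mono L by blast
    then show ?thesis unfolding x_def y_def by simp
  qed
  have yz: "y \<le> z" using zy r0 by simp
  define M where "M = min (2*y) z"
  have cM: "b (i-1) + b i \<le> M" if "i \<in> {3..L}" for i
  proof -
    have "b (i-1) \<le> y" "b i \<le> y" unfolding y_def using bmono[OF mono, of 2] that by auto
    moreover have "b (i-1) + b i \<le> z"
    proof -
      have "b (i-1) + b i = (\<Sum>j\<in>{i-1,i}. b j)" using that by auto
      also have "\<dots> \<le> z" unfolding z_def using that nn by (intro sum_mono2) auto
      finally show ?thesis .
    qed
    ultimately show ?thesis unfolding M_def by auto
  qed
  have "(\<Sum>i\<in>{3..L}. (b (i-1) + b i)^2) \<le> (\<Sum>i\<in>{3..L}. M * (b (i-1) + b i))"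
  proof (intro sum_mono)
    fix i assume i: "i \<in> {3..L}"
    have c0: "0 \<le> b (i-1) + b i" using nn by (simp add: add_nonneg_nonneg)
    show "(b (i-1) + b i)^2 \<le> M * (b (i-1) + b i)"
      unfolding power2_eq_square using cM[OF i] c0 by (rule mult_right_mono)
  qed
  also have "\<dots> = M * ((\<Sum>i\<in>{3..L}. b (i-1)) + (\<Sum>i\<in>{3..L}. b i))"
    by (simp add: sum_distrib_left[symmetric] sum.distrib)
  also have "\<dots> \<le> M * (z + (z - y))"
  proof (rule mult_left_mono)
    show "(\<Sum>i\<in>{3..L}. b (i-1)) + (\<Sum>i\<in>{3..L}. b i) \<le> z + (z - y)"
      using sum_shift_prev[OF nn L] zy unfolding z_def by simp
    show "0 \<le> M" unfolding M_def using y0 yz by auto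
  qed
  finally have R: "(\<Sum>i\<in>{3..L}. (b (i-1) + b i)^2) \<le> M * (2*z - y)" by simp
  have S: "(\<Sum>i\<in>{2..L}. (b (i-1) + b i)^2) = (x+y)^2 + (\<Sum>i\<in>{3..L}. (b (i-1) + b i)^2)"
    unfolding x_def y_def using L by (subst sum.atLeast_Suc_atMost) auto
  have P: "(x+y)^2 + M * (2*z - y) \<le> 7/5 * (x+z)^2"
  proof (cases "2*y \<le> z")
    case True
    then have "M = 2*y" unfolding M_def by simp
    then show ?thesis using polyA[OF y0 yx True] by simp
  next
    case False
    then have "M = z" unfolding M_def by simp
    then show ?thesis using polyB[OF y0 yx yz] False by simp
  qed
  show ?thesis unfolding Bxz using S R P by linarith
qed

lemma RL1:
  fixes b :: "nat \<Rightarrow> real" and p :: real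
  assumes p: "0 < p" "p \<le> 1/2" and nn: "\<forall>i. 0 \<le> b i"
    and mono: "\<forall>i. 2 \<le> i \<and> i \<le> L \<longrightarrow> b i \<le> b (i-1)"
  shows "(\<Sum>i\<in>{2..L}. b (i-1) powr (1/p - 1/2) * sqrt (b i))
          \<le> 7/5 * (sqrt (p/2) * ((2-p)/2) powr (1/p - 1/2)) * (\<Sum>i\<in>{1..L}. b i) powr (1/p)"
proof -
  define K where "K = sqrt (p/2) * ((2-p)/2) powr (1/p - 1/2)"
  define B where "B = (\<Sum>i\<in>{1..L}. b i)"
  have K0: "0 \<le> K" unfolding K_def using p by (intro mult_nonneg_nonneg) auto
  have B0: "0 \<le> B" unfolding B_def using nn by (simp add: sum_nonneg)
  have s2: "1/p - 2 \<ge> 0" using p by (simp add: field_simps)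
  have cB: "b (i-1) + b i \<le> B" if "i \<in> {2..L}" for i
  proof -
    have "b (i-1) + b i = (\<Sum>j\<in>{i-1,i}. b j)" using that by auto
    also have "\<dots> \<le> B" unfolding B_def using that nn by (intro sum_mono2) auto
    finally show ?thesis .
  qed
  have "(\<Sum>i\<in>{2..L}. b (i-1) powr (1/p - 1/2) * sqrt (b i))
      \<le> (\<Sum>i\<in>{2..L}. K * (b (i-1) + b i) powr (1/p))"
    unfolding K_def using amgm_w p nn by (intro sum_mono) auto
  also have "\<dots> \<le> (\<Sum>i\<in>{2..L}. K * ((b (i-1) + b i)^2 * B powr (1/p - 2)))"
  proof (intro sum_mono mult_left_mono K0)
    fix i assume i: "i \<in> {2..L}"
    define c where "c = b (i-1) + b i"
    have c0: "0 \<le> c" unfolding c_def using nn by (simp add: add_nonneg_nonneg)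
    have "c powr (1/p) = c powr 2 * c powr (1/p - 2)" by (simp add: powr_add[symmetric])
    also have "c powr 2 = c^2" using c0 by (simp add: powr_numeral)
    also have "c powr (1/p - 2) \<le> B powr (1/p - 2)" using cB[OF i] c0 s2 unfolding c_def
      by (intro powr_mono2) auto
    then have "c^2 * c powr (1/p - 2) \<le> c^2 * B powr (1/p - 2)" by (simp add: mult_left_mono)
    finally show "(b (i-1) + b i) powr (1/p) \<le> (b (i-1) + b i)^2 * B powr (1/p - 2)"
      unfolding c_def .
  qed
  also have "\<dots> = K * B powr (1/p - 2) * (\<Sum>i\<in>{2..L}. (b (i-1) + b i)^2)"
    by (simp add: sum_distrib_left mult_ac)
  also have "\<dots> \<le> K * B powr (1/p - 2) * (7/5 * B^2)"
    using sumsq[OF nn mono] K0 unfolding B_def by (intro mult_left_mono) auto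
  also have "\<dots> = 7/5 * K * B powr (1/p)"
  proof -
    have "B powr (1/p - 2) * B^2 = B powr (1/p)"
    proof (cases "B = 0")
      case True then show ?thesis using p by simp
    next
      case False
      then have "B^2 = B powr 2" using B0 by (simp add: powr_numeral)
      then show ?thesis by (simp add: powr_add[symmetric])
    qed
    then show ?thesis by (simp add: mult_ac)
  qed
  finally show ?thesis unfolding K_def B_def by simp
qed



lemma b1_eq: "sqrt (p / 2) * (2 / (2 - p)) powr (1 / 2 - 1 / p) = sqrt (p/2) * ((2-p)/2) powr (1/p - 1/2)"
proof -
  have e1: "(2 / (2 - p)) powr (1 / 2 - 1 / p) = (inverse ((2-p)/2)) powr (1/2 - 1/p)"
    by (simp add: inverse_eq_divide)
  have e2: "(inverse ((2-p)/2)) powr (1/2 - 1/p) = inverse (((2-p)/2) powr (1/2 - 1/p))" by (rule inverse_powr)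
  have e3: "((2-p)/2) powr (1/p - 1/2) = ((2-p)/2) powr (-(1/2 - 1/p))" by simp
  have e4: "((2-p)/2) powr (-(1/2 - 1/p)) = inverse (((2-p)/2) powr (1/2 - 1/p))" by (rule powr_minus)
  show ?thesis using e1 e2 e3 e4 by simp
qed

lemma b1_gg:
  assumes "0 < p" "p < 1"
  shows "sqrt (p/2) * ((2-p)/2) powr (1/p - 1/2) = exp (GG p) * 2 powr (1/2 - 1/p)"
proof -
  have e1: "((2-p)/2) powr (1/p - 1/2) = (2-p) powr (1/p - 1/2) / 2 powr (1/p - 1/2)"
    by (rule powr_divide)
  have e2: "2 powr (1/2 - 1/p) = 2 powr (-(1/p - 1/2))" by simp
  have e3: "(2::real) powr (-(1/p - 1/2)) = 1 / 2 powr (1/p - 1/2)" by (rule powr_minus_divide)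
  have e4: "sqrt (p/2) * (2-p) powr (1/p - 1/2) = exp (GG p)" using gg_exp assms by simp
  have "sqrt (p/2) * ((2-p)/2) powr (1/p - 1/2) = (sqrt (p/2) * (2-p) powr (1/p - 1/2)) * (1 / 2 powr (1/p - 1/2))"
    unfolding e1 by simp
  then show ?thesis unfolding e4 e2 e3 .
qed

lemma const_small:
  assumes p: "0 < p" "p \<le> 1/2"
  shows "7/5 * (sqrt (p/2) * ((2-p)/2) powr (1/p - 1/2)) \<le> sqrt 2 * C1 p"
proof -
  define b1 where "b1 = sqrt (p/2) * ((2-p)/2) powr (1/p - 1/2)"
  define b2 where "b2 = 2 powr (1/2 - 1/p)"
  have b10: "0 \<le> b1" unfolding b1_def using p by (intro mult_nonneg_nonneg) auto
  have b20: "0 \<le> b2" unfolding b2_def by simp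
  have s2: "7/5 \<le> sqrt (2::real)" by (rule real_le_rsqrt) (auto simp: power2_eq_square)
  show ?thesis
  proof (cases "p \<le> p_star")
    case True
    then have "C1 p = b1" unfolding C1_def b1_def using b1_eq by simp
    then show ?thesis using mult_right_mono[OF s2 b10] unfolding b1_def[symmetric] by simp
  next
    case False
    then have C: "C1 p = b2" unfolding C1_def b2_def by simp
    have "GG p < GG p_star" using GG_strict[of p_star p] p_star_props False p by auto
    then have "exp (GG p) < 1" using p_star_props by simp
    then have "b1 \<le> b2" unfolding b1_def b2_def using b1_gg[of p] p
      by (simp add: mult_left_le_one_le)
    then have "7/5 * b1 \<le> 7/5 * b2" by simp
    also have "\<dots> \<le> sqrt 2 * b2" using mult_right_mono[OF s2 b20] by simp
    finally show ?thesis unfolding C b1_def .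
  qed
qed

lemma const_big:
  assumes p: "1/2 \<le> p" "p < 1"
  shows "2 powr (1 - 1/p) \<le> sqrt 2 * C1 p"
proof -
  have "\<not> p \<le> p_star" using p_star_props p by linarith
  then have C: "C1 p = 2 powr (1/2 - 1/p)" unfolding C1_def by simp
  have "sqrt 2 * 2 powr (1/2 - 1/p) = 2 powr (1/2) * 2 powr (1/2 - 1/p)"
    by (simp add: powr_half_sqrt)
  also have "\<dots> = 2 powr (1 - 1/p)" by (simp add: powr_add[symmetric])
  finally show ?thesis using C by simp
qed

lemma RL:
  fixes b :: "nat \<Rightarrow> real" and p :: real
  assumes p: "0 < p" "p < 1" and nn: "\<forall>i. 0 \<le> b i"
    and mono: "\<forall>i. 2 \<le> i \<and> i \<le> L \<longrightarrow> b i \<le> b (i-1)"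
  shows "(\<Sum>i\<in>{2..L}. b (i-1) powr (1/p - 1/2) * sqrt (b i))
          \<le> sqrt 2 * C1 p * (\<Sum>i\<in>{1..L}. b i) powr (1/p)"
proof (cases "p \<le> 1/2")
  case True
  show ?thesis
    using RL1[OF p(1) True nn mono] const_small[OF p(1) True]
    by (meson mult_right_mono order_trans powr_ge_zero)
next
  case False
  have s: "1 \<le> 1/p" "1/p \<le> 2" using p False by (auto simp: field_simps)
  show ?thesis
    using RL2[OF s nn mono] const_big[of p] False p
    by (meson less_eq_real_def mult_right_mono not_le order_trans powr_ge_zero)
qed



lemma blocks_sum:
  fixes f :: "nat \<Rightarrow> real"
  shows "(\<Sum>j<l*k. f j) = (\<Sum>i\<in>{1..l}. \<Sum>j\<in>{(i-1)*k..<i*k}. f j)"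
proof (induction l)
  case 0 then show ?case by simp
next
  case (Suc l)
  have "(\<Sum>j<Suc l * k. f j) = (\<Sum>j\<in>{0..<l*k}. f j) + (\<Sum>j\<in>{l*k..<Suc l * k}. f j)"
    by (simp add: sum.atLeastLessThan_concat lessThan_atLeast0)
  also have "(\<Sum>j\<in>{0..<l*k}. f j) = (\<Sum>j<l*k. f j)" by (simp add: lessThan_atLeast0)
  finally show ?case using Suc by simp
qed

theorem lemma12:
  fixes k l m n :: nat and A :: "nat \<Rightarrow> nat \<Rightarrow> real"
    and x e y xs h :: "nat \<Rightarrow> real" and \<epsilon> p :: real
    and \<sigma> :: "nat \<Rightarrow> nat"
  assumes "k > 0" "l > 0" "m > 0"
    and "n = (l + 1) * k"
    and "\<epsilon> \<ge> 0"
    and "l2_norm {..<m} e \<le> \<epsilon>"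
    and "\<forall>i<m. y i = mat_vec n A x i + e i"
    and "0 < p" "p < 1"
    and "l2_norm {..<m} (\<lambda>i. y i - mat_vec n A xs i) \<le> \<epsilon>"
    and "\<forall>\<gamma>. l2_norm {..<m} (\<lambda>i. y i - mat_vec n A \<gamma> i) \<le> \<epsilon>
              \<longrightarrow> lp_norm p {..<n} xs \<le> lp_norm p {..<n} \<gamma>"
    and "h = (\<lambda>i. x i - xs i)"
    and "bij_betw \<sigma> {..<l * k} {k..<n}"
    and "\<forall>i j. i \<le> j \<and> j < l * k \<longrightarrow> \<bar>h (\<sigma> j)\<bar> \<le> \<bar>h (\<sigma> i)\<bar>"
  shows "(\<Sum>i\<in>{2..l}. l2_norm (\<sigma> ` {(i - 1) * k..<i * k}) h)
           \<le> sqrt 2 * C1 p * real k powr (1 / 2 - 1 / p) * lp_norm p {k..<n} h"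
proof -
  note kpos = assms(1) and p = assms(8,9) and bij = assms(13) and srt = assms(14)
  define a where "a j = \<bar>h (\<sigma> j)\<bar>" for j
  define J where "J i = {(i-1)*k..<i*k}" for i :: nat
  define b where "b i = (\<Sum>j\<in>J i. a j powr p)" for i
  have a0: "0 \<le> a j" for j unfolding a_def by simp
  have amono: "a j \<le> a i" if "i \<le> j" "j < l*k" for i j using srt that unfolding a_def by blast
  have b0: "\<forall>i. 0 \<le> b i" unfolding b_def by (simp add: sum_nonneg)
  have inj: "inj_on \<sigma> {..<l*k}" using bij by (simp add: bij_betw_def)
  have Jsub: "J i \<subseteq> {..<l*k}" if "i \<le> l" for i
  proof
    fix j assume "j \<in> J i"
    then have "j < i*k" unfolding J_def by simp
    also have "i*k \<le> l*k" using that by simp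
    finally show "j \<in> {..<l*k}" by simp
  qed
  have cardJ: "card (J i) = k" if "i \<ge> 1" for i
  proof -
    have "i*k = (i-1)*k + k" using that by (cases i) auto
    then show ?thesis unfolding J_def by simp
  qed
  have l2eq: "l2_norm (\<sigma> ` J i) h = sqrt (\<Sum>j\<in>J i. (a j)^2)" if "i \<le> l" for i
  proof -
    have "inj_on \<sigma> (J i)" using inj Jsub[OF that] by (rule inj_on_subset)
    then show ?thesis unfolding l2_norm_def a_def by (simp add: sum.reindex)
  qed
  have lpeq: "lp_norm p {k..<n} h = (\<Sum>i\<in>{1..l}. b i) powr (1/p)"
  proof -
    have "{k..<n} = \<sigma> ` {..<l*k}" using bij by (simp add: bij_betw_def)
    then have "(\<Sum>i\<in>{k..<n}. \<bar>h i\<bar> powr p) = (\<Sum>j<l*k. a j powr p)"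
      using inj unfolding a_def by (simp add: sum.reindex)
    also have "\<dots> = (\<Sum>i\<in>{1..l}. b i)" unfolding b_def J_def by (rule blocks_sum)
    finally show ?thesis unfolding lp_norm_def by simp
  qed
  have blk: "sqrt (\<Sum>j\<in>J i. (a j)^2) \<le> real k powr (1/2 - 1/p) * (b (i-1) powr (1/p - 1/2) * sqrt (b i))
            \<and> b i \<le> b (i-1)" if i: "2 \<le> i" "i \<le> l" for i
  proof -
    define q where "q = (i-1)*k - 1"
    define mm where "mm = a q"
    have mm0: "0 \<le> mm" unfolding mm_def by (rule a0)
    have ik: "k \<le> (i-1)*k"
    proof -
      have "1 \<le> i-1" using i by linarith
      then show ?thesis using mult_le_mono1[of 1 "i-1" k] by simp
    qed
    have qlt: "q < (i-1)*k" unfolding q_def using ik kpos by simp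
    have qlk: "q < l*k" using qlt i by (meson diff_le_self le_trans mult_le_mono1 not_le)
    have J1: "J (i-1) = {(i-2)*k..<(i-1)*k}" unfolding J_def by (simp add: numeral_2_eq_2)
    have ge: "mm \<le> a j" if "j \<in> J (i-1)" for j
      unfolding mm_def using that qlk J1 q_def by (intro amono) auto
    have le: "a j \<le> mm" if "j \<in> J i" for j
    proof -
      have "j < l*k" using Jsub[OF i(2)] that by auto
      moreover have "q \<le> j" using that qlt unfolding J_def by auto
      ultimately show ?thesis unfolding mm_def by (intro amono)
    qed
    have c1: "card (J (i-1)) = k" "card (J i) = k" using cardJ i by auto
    have bi1: "real k * mm powr p \<le> b (i-1)"
    proof -
      have "(\<Sum>j\<in>J (i-1). mm powr p) \<le> b (i-1)"
        unfolding b_def using ge mm0 p by (intro sum_mono powr_mono2) auto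
      then show ?thesis using c1 by simp
    qed
    have bi2: "b i \<le> real k * mm powr p"
    proof -
      have "b i \<le> (\<Sum>j\<in>J i. mm powr p)"
        unfolding b_def using le a0 p by (intro sum_mono powr_mono2) auto
      then show ?thesis using c1 by simp
    qed
    have sq: "(\<Sum>j\<in>J i. (a j)^2) \<le> mm powr (2-p) * b i"
    proof -
      have "(\<Sum>j\<in>J i. (a j)^2) \<le> (\<Sum>j\<in>J i. mm powr (2-p) * a j powr p)"
      proof (intro sum_mono)
        fix j assume j: "j \<in> J i"
        have "(a j)^2 = a j powr 2" using a0 by (simp add: powr_numeral)
        also have "\<dots> = a j powr (2-p) * a j powr p" by (simp add: powr_add[symmetric])
        also have "\<dots> \<le> mm powr (2-p) * a j powr p"
          using le[OF j] a0 p by (intro mult_right_mono powr_mono2) auto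
        finally show "(a j)^2 \<le> mm powr (2-p) * a j powr p" .
      qed
      then show ?thesis unfolding b_def by (simp add: sum_distrib_left)
    qed
    have h1: "sqrt (\<Sum>j\<in>J i. (a j)^2) \<le> sqrt (mm powr (2-p)) * sqrt (b i)"
      using sq by (simp add: real_sqrt_mult[symmetric])
    have h2: "sqrt (mm powr (2-p)) = (mm powr p) powr (1/p - 1/2)"
    proof -
      have "sqrt (mm powr (2-p)) = mm powr ((2-p)/2)" using mm0 by (simp add: powr_half_sqrt_powr)
      also have "(2-p)/2 = p * (1/p - 1/2)" using p by (simp add: field_simps)
      finally show ?thesis by (simp add: powr_powr)
    qed
    have h3: "(mm powr p) powr (1/p - 1/2) \<le> (b (i-1) / real k) powr (1/p - 1/2)"
    proof (rule powr_mono2)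
      show "0 \<le> 1/p - 1/2" using p by (simp add: field_simps)
      show "0 \<le> mm powr p" by simp
      show "mm powr p \<le> b (i-1) / real k" using bi1 kpos by (simp add: field_simps)
    qed
    have h4: "(b (i-1) / real k) powr (1/p - 1/2) = real k powr (1/2 - 1/p) * b (i-1) powr (1/p - 1/2)"
    proof -
      have "(b (i-1) / real k) powr (1/p - 1/2) = b (i-1) powr (1/p - 1/2) / real k powr (1/p - 1/2)"
        by (rule powr_divide)
      moreover have "real k powr (1/2 - 1/p) = 1 / real k powr (1/p - 1/2)"
      proof -
        have "real k powr (1/2 - 1/p) = real k powr (-(1/p - 1/2))" by simp
        also have "\<dots> = 1 / real k powr (1/p - 1/2)" by (rule powr_minus_divide)
        finally show ?thesis .
      qed
      ultimately show ?thesis by simp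
    qed
    have "sqrt (\<Sum>j\<in>J i. (a j)^2) \<le> real k powr (1/2 - 1/p) * b (i-1) powr (1/p - 1/2) * sqrt (b i)"
      using h1 mult_right_mono[OF h3, of "sqrt (b i)"] b0 unfolding h2 h4 by (simp add: mult.assoc)
    then show ?thesis using bi1 bi2 by (simp add: mult.assoc)
  qed
  have mono: "\<forall>i. 2 \<le> i \<and> i \<le> l \<longrightarrow> b i \<le> b (i-1)" using blk by blast
  have "(\<Sum>i\<in>{2..l}. l2_norm (\<sigma> ` {(i - 1) * k..<i * k}) h)
      = (\<Sum>i\<in>{2..l}. sqrt (\<Sum>j\<in>J i. (a j)^2))"
    using l2eq unfolding J_def by (intro sum.cong) auto
  also have "\<dots> \<le> (\<Sum>i\<in>{2..l}. real k powr (1/2 - 1/p) * (b (i-1) powr (1/p - 1/2) * sqrt (b i)))"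
    using blk by (intro sum_mono) auto
  also have "\<dots> = real k powr (1/2 - 1/p) * (\<Sum>i\<in>{2..l}. b (i-1) powr (1/p - 1/2) * sqrt (b i))"
    by (simp add: sum_distrib_left)
  also have "\<dots> \<le> real k powr (1/2 - 1/p) * (sqrt 2 * C1 p * (\<Sum>i\<in>{1..l}. b i) powr (1/p))"
    using RL[OF p b0 mono] by (intro mult_left_mono) auto
  also have "\<dots> = sqrt 2 * C1 p * real k powr (1 / 2 - 1 / p) * lp_norm p {k..<n} h"
    unfolding lpeq by (simp add: mult_ac)
  finally show ?thesis .
qed


end
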